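(* Let $q$ be an odd prime power, $d$ a positive integer, and $\varphi_d$ the coloring defined below. If $s_1,\dots,s_t \in (\mathbb{F}_q^* )^d$ form a $t$-falling star under $\varphi_d$ (with the labeling in the definition below), then $s_1,\dots,s_{t-1}$ are linearly independent. Consequently, for every nonempty finite subset $T \subseteq (\mathbb{F}_q^* )^d$, $\mathrm{rk}(T) \ge \mathrm{FS}(T) - 1$. Moreover, if there exist a vector $v \in (\mathbb{F}_q^* )^d\setminus T$ and a color $\gamma$ with $\varphi_d(v,x)=\gamma$ for all $x \in T$, then $\mathrm{rk}(T) \ge \mathrm{FS}(T)$.
   Context: $\mathbb{F}_q^*$ is the set of nonzero elements of $\mathbb{F}_q$, endowed with an arbitrary fixed linear order; $(\mathbb{F}_q^* )^d$ is ordered lexicographically with respect to it. Let $C_d = \mathrm{DOT} \sqcup \mathrm{ZERO}\sqcup\mathrm{UP}\sqcup\mathrm{DOWN}$, where $\mathrm{DOT} = \mathbb{F}_q^*$ and ZERO, UP, DOWN are three disjoint copies of $\{1,\dots,d\}\times \mathbb{F}_q$. For distinct $x<y$ in $(\mathbb{F}_q^* )^d$, let $i$ be the first coordinate where $x$ and $y$ differ, and $x\cdot y$ the standard dot product; $\varphi_d(x,y)=\varphi_d(y,x)$ is $(i,x_i+y_i)$ in ZERO if $x\cdot y=0$; $(i,x_i+y_i)$ in UP if $x\cdot y\ne 0$ and $x\cdot y=x\cdot x$; $(i,x_i+y_i)$ in DOWN if $x\cdot y\notin\{0,x\cdot x\}$ and $x\cdot y=y\cdot y$; and $x\cdot y\in\mathrm{DOT}$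 otherwise. Distinct vectors $s_1,\dots,s_t$ form a $t$-falling star under $\varphi_d$ if there are colors $\alpha_2,\dots,\alpha_t$ with $\varphi_d(s_i,s_j) = \alpha_i$ for all $1 \le j < i \le t$. $\mathrm{FS}(T)$ is the maximum $t$ such that $T$ contains a $t$-falling star. $\mathrm{rk}(T)$ is the dimension of the linear span of $T$. *)

theory Defs
  imports Main "HOL.Vector_Spaces" "HOL-Library.Function_Algebras" "HOL-Library.Cardinality"
begin

text \<open>Vectors of (F_q^*)^d are represented as functions nat => 'a which are nonzero
on coordinates 0..d-1 and zero elsewhere (coordinates are 0-indexed).\<close>

definition nzvecs :: "nat \<Rightarrow> (nat \<Rightarrow> 'a::field) set" where
  "nzvecs d = {x. (\<forall>i<d. x i \<noteq> 0) \<and> (\<forall>i\<ge>d. x i = 0)}"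

definition dotp :: "nat \<Rightarrow> (nat \<Rightarrow> 'a::field) \<Rightarrow> (nat \<Rightarrow> 'a) \<Rightarrow> 'a" where
  "dotp d x y = (\<Sum>i<d. x i * y i)"

definition vscale :: "'a::field \<Rightarrow> (nat \<Rightarrow> 'a) \<Rightarrow> (nat \<Rightarrow> 'a)" where
  "vscale c x = (\<lambda>i. c * x i)"

definition rk :: "(nat \<Rightarrow> 'a::field) set \<Rightarrow> nat" where
  "rk T = vector_space.dim vscale T"

definition lin_indep :: "(nat \<Rightarrow> 'a::field) set \<Rightarrow> bool" where
  "lin_indep S = (\<not> module.dependent vscale S)"

definition lexless :: "('a \<times> 'a) set \<Rightarrow> nat \<Rightarrow> (nat \<Rightarrow> 'a) \<Rightarrow> (nat \<Rightarrow> 'a) \<Rightarrow> bool" where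
  "lexless r d x y = (\<exists>i<d. (\<forall>j<i. x j = y j) \<and> x i \<noteq> y i \<and> (x i, y i) \<in> r)"

datatype 'a color = DOT 'a | ZERO nat 'a | UP nat 'a | DOWN nat 'a

definition phi_ord :: "nat \<Rightarrow> (nat \<Rightarrow> 'a::field) \<Rightarrow> (nat \<Rightarrow> 'a) \<Rightarrow> 'a color" where
  "phi_ord d x y =
    (let i = (LEAST i. x i \<noteq> y i); s = x i + y i; p = dotp d x y in
     if p = 0 then ZERO i s
     else if p = dotp d x x then UP i s
     else if p = dotp d y y then DOWN i s
     else DOT p)"

definition phi :: "('a \<times> 'a) set \<Rightarrow> nat \<Rightarrow> (nat \<Rightarrow> 'a::field) \<Rightarrow> (nat \<Rightarrow> 'a) \<Rightarrow> 'a color" where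
  "phi r d x y = (if lexless r d x y then phi_ord d x y else phi_ord d y x)"

text \<open>s!0,...,s!(t-1) correspond to s_1,...,s_t.\<close>
definition falling_star :: "('a \<times> 'a) set \<Rightarrow> nat \<Rightarrow> (nat \<Rightarrow> 'a::field) list \<Rightarrow> bool" where
  "falling_star r d s = (distinct s \<and> set s \<subseteq> nzvecs d \<and>
     (\<exists>\<alpha>. \<forall>i j. j < i \<and> i < length s \<longrightarrow> phi r d (s!i) (s!j) = \<alpha> i))"

definition FS :: "('a \<times> 'a) set \<Rightarrow> nat \<Rightarrow> (nat \<Rightarrow> 'a::field) set \<Rightarrow> nat" where
  "FS r d T = Max {length s | s. falling_star r d s \<and> set s \<subseteq> T}"

end

theory Submission imports Defs begin

interpretation vs: vector_space "vscale :: 'a::field \<Rightarrow> (nat \<Rightarrow> 'a) \<Rightarrow> (nat \<Rightarrow> 'a)"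
  by unfold_locales (auto simp: vscale_def fun_eq_iff algebra_simps)

definition lf :: "nat \<Rightarrow> (nat \<Rightarrow> 'a::field) \<Rightarrow> (nat \<Rightarrow> 'a) \<Rightarrow> 'a" where
  "lf d w y = (\<Sum>l<d. w l * y l)"

lemma lf_span:
  assumes "x \<in> vs.span S" "\<forall>y\<in>S. lf d w y = 0"
  shows "lf d w x = (0::'a::field)"
  using assms(1)
proof (induct rule: vs.span_induct_alt)
  case base then show ?case by (simp add: lf_def)
next
  case (step c x y)
  have eq: "lf d w (vscale c x + y) = c * lf d w x + lf d w y"
    by (simp add: lf_def vscale_def sum_distrib_left sum.distrib algebra_simps)
  show ?case unfolding eq using step assms(2) by simp
qed

lemma card_le_rk:
  assumes "B \<subseteq> T" "finite T" "lin_indep B"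
  shows "card B \<le> rk (T::(nat \<Rightarrow> 'a::field) set)"
proof -
  obtain B' where "B \<subseteq> B'" "B' \<subseteq> T" "vs.independent B'" "T \<subseteq> vs.span B'"
    using vs.maximal_independent_subset_extend[of B T] assms unfolding lin_indep_def by blast
  then have "card B' = rk T" unfolding rk_def using vs.basis_card_eq_dim by blast
  moreover have "card B \<le> card B'" using \<open>B \<subseteq> B'\<close> \<open>B' \<subseteq> T\<close> assms(2)
    by (meson card_mono finite_subset)
  ultimately show ?thesis by simp
qed

lemma phi_info:
  assumes x: "x \<in> nzvecs d" and y: "y \<in> nzvecs d" and xy: "x \<noteq> y"
  shows "(\<exists>p. phi r d x y = DOT p \<and> p = dotp d x y \<and> p \<noteq> 0 \<and> p \<noteq> dotp d x x \<and> p \<noteq> dotp d y y)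
      \<or> (\<exists>k s. phi r d x y \<in> {ZERO k s, UP k s, DOWN k s} \<and> k < d \<and> x k \<noteq> y k \<and> s = x k + y k)"
proof -
  obtain l where l: "x l \<noteq> y l" using xy by auto
  have ld: "l < d" proof (rule ccontr)
    assume "\<not> l < d"
    then have "x l = 0" "y l = 0" using x y unfolding nzvecs_def by auto
    with l show False by simp
  qed
  define k where "k = (LEAST i. x i \<noteq> y i)"
  have k2: "k = (LEAST i. y i \<noteq> x i)" proof -
    have "(\<lambda>i. x i \<noteq> y i) = (\<lambda>i. y i \<noteq> x i)" by auto
    then show ?thesis unfolding k_def by simp
  qed
  have kxy: "x k \<noteq> y k" unfolding k_def by (rule LeastI[of _ l]) (rule l)
  have "k \<le> l" unfolding k_def by (rule Least_le) (rule l)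
  then have kd: "k < d" using ld by simp
  have dsym: "dotp d x y = dotp d y x" unfolding dotp_def by (simp add: mult.commute)
  have po: "phi_ord d x y = (if dotp d x y = 0 then ZERO k (x k + y k)
     else if dotp d x y = dotp d x x then UP k (x k + y k)
     else if dotp d x y = dotp d y y then DOWN k (x k + y k) else DOT (dotp d x y))"
    unfolding phi_ord_def Let_def k_def by (rule refl)
  have po2: "phi_ord d y x = (if dotp d x y = 0 then ZERO k (x k + y k)
     else if dotp d x y = dotp d y y then UP k (x k + y k)
     else if dotp d x y = dotp d x x then DOWN k (x k + y k) else DOT (dotp d x y))"
    unfolding phi_ord_def Let_def k2[symmetric] dsym[symmetric] add.commute[of "y k"] by (rule refl)
  have "phi r d x y = phi_ord d x y \<or> phi r d x y = phi_ord d y x" unfolding phi_def by simp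
  have A: "phi r d x y \<in> {ZERO k (x k + y k), UP k (x k + y k), DOWN k (x k + y k)} \<Longrightarrow> ?thesis"
    using kxy kd by blast
  have B: "phi r d x y = DOT (dotp d x y) \<Longrightarrow> dotp d x y \<noteq> 0 \<Longrightarrow> dotp d x y \<noteq> dotp d x x \<Longrightarrow> dotp d x y \<noteq> dotp d y y \<Longrightarrow> ?thesis"
    by blast
  from \<open>phi r d x y = phi_ord d x y \<or> phi r d x y = phi_ord d y x\<close> show ?thesis
  proof
    assume e: "phi r d x y = phi_ord d x y"
    show ?thesis using A B unfolding e po by (cases "dotp d x y = 0"; cases "dotp d x y = dotp d x x"; cases "dotp d x y = dotp d y y") simp_all
  next
    assume e: "phi r d x y = phi_ord d y x"
    show ?thesis using A B unfolding e po2 by (cases "dotp d x y = 0"; cases "dotp d x y = dotp d x x"; cases "dotp d x y = dotp d y y") simp_all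
  qed
qed


lemma lf_e: "k < d \<Longrightarrow> lf d (\<lambda>l. if l = k then 1 else 0) y = y k"
  unfolding lf_def by (subst sum.cong[OF refl, where h="\<lambda>l. if l = k then y k else 0"]) auto

lemma lf_dot: "lf d x y = dotp d x y"
  unfolding lf_def dotp_def by simp

lemma row:
  assumes fs: "falling_star r d s" and i: "0 < i" "i < length s"
  shows "\<exists>w c. c \<noteq> (0::'a::field) \<and> (\<forall>j<i. lf d w (s!j) = c) \<and> lf d w (s!i) \<noteq> c"
proof -
  obtain \<alpha> where al: "\<And>i j. j < i \<Longrightarrow> i < length s \<Longrightarrow> phi r d (s!i) (s!j) = \<alpha> i"
    using fs unfolding falling_star_def by blast
  have dist: "distinct s" and nz: "set s \<subseteq> nzvecs d" using fs unfolding falling_star_def by auto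
  have mem: "\<And>j. j < length s \<Longrightarrow> s!j \<in> nzvecs d" using nz by auto
  have ne: "\<And>j. j < i \<Longrightarrow> s!i \<noteq> s!j" using dist i by (simp add: nth_eq_iff_index_eq)
  have info: "(\<exists>p. \<alpha> i = DOT p \<and> p = dotp d (s!i) (s!j) \<and> p \<noteq> 0 \<and> p \<noteq> dotp d (s!i) (s!i) \<and> p \<noteq> dotp d (s!j) (s!j))
      \<or> (\<exists>k sg. \<alpha> i \<in> {ZERO k sg, UP k sg, DOWN k sg} \<and> k < d \<and> (s!i) k \<noteq> (s!j) k \<and> sg = (s!i) k + (s!j) k)" if j: "j < i" for j
  proof -
    have mi: "s!i \<in> nzvecs d" using mem i by blast
    have mj: "s!j \<in> nzvecs d" using mem i j by simp
    have e: "phi r d (s!i) (s!j) = \<alpha> i" using al[OF j i(2)] .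
    show ?thesis unfolding e[symmetric] by (rule phi_info[OF mi mj ne[OF j]])
  qed
  from info[OF i(1)] show ?thesis
  proof (elim disjE exE conjE)
    fix p assume p: "\<alpha> i = DOT p" "p = dotp d (s ! i) (s ! 0)" "p \<noteq> 0" "p \<noteq> dotp d (s ! i) (s ! i)"
    have "\<forall>j<i. lf d (s!i) (s!j) = p"
    proof (intro allI impI)
      fix j assume j: "j < i"
      from info[OF j] show "lf d (s!i) (s!j) = p"
      proof (elim disjE exE conjE)
        fix p' assume "\<alpha> i = DOT p'" "p' = dotp d (s ! i) (s ! j)"
        then show ?thesis using p(1) by (simp add: lf_dot)
      next
        fix k sg assume "\<alpha> i \<in> {ZERO k sg, UP k sg, DOWN k sg}"
        then show ?thesis using p(1) by simp
      qed
    qed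
    moreover have "lf d (s!i) (s!i) \<noteq> p" using p(4) by (simp add: lf_dot)
    ultimately show ?thesis using p(3) by blast
  next
    fix k sg assume k: "\<alpha> i \<in> {ZERO k sg, UP k sg, DOWN k sg}" "k < d" "(s!i) k \<noteq> (s!0) k" "sg = (s!i) k + (s!0) k"
    define E where "E = (\<lambda>l::nat. if l = k then (1::'a) else 0)"
    have "\<forall>j<i. lf d E (s!j) = (s!0) k"
    proof (intro allI impI)
      fix j assume j: "j < i"
      from info[OF j] have "(s!j) k = (s!0) k"
      proof (elim disjE exE conjE)
        fix p' assume "\<alpha> i = DOT p'"
        then show ?thesis using k(1) by simp
      next
        fix k' sg' assume k': "\<alpha> i \<in> {ZERO k' sg', UP k' sg', DOWN k' sg'}" "sg' = (s!i) k' + (s!j) k'"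
        from k(1) k'(1) have "k' = k" "sg' = sg" by auto
        then have "(s!i) k + (s!j) k = (s!i) k + (s!0) k" using k(4) k'(2) by simp
        then show ?thesis by simp
      qed
      then show "lf d E (s!j) = (s!0) k" using k(2) unfolding E_def by (simp add: lf_e)
    qed
    moreover have "(s!0) k \<noteq> 0"
    proof -
      have "s!0 \<in> nzvecs d" using mem[of 0] i by linarith
      then show ?thesis using k(2) unfolding nzvecs_def by auto
    qed
    moreover have "lf d E (s!i) \<noteq> (s!0) k" using k(2,3) unfolding E_def by (simp add: lf_e)
    ultimately show ?thesis by blast
  qed
qed

lemma lf_comb: "lf d (\<lambda>l. w l - a * v l) y = lf d w y - a * lf d v y"
  unfolding lf_def by (simp add: sum_subtractf sum_distrib_left algebra_simps)

lemma indep_take: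
  assumes fs: "falling_star r d s" and d: "0 < d"
  shows "lin_indep (set (take (length s - 1) s))"
proof -
  have dist: "distinct s" and nz: "set s \<subseteq> nzvecs d" using fs unfolding falling_star_def by auto
  have mem: "\<And>j. j < length s \<Longrightarrow> s!j \<in> nzvecs d" using nz by auto
  have "n \<le> length s - 1 \<Longrightarrow> vs.independent (set (take n s))" for n
  proof (induction n)
    case 0 then show ?case by (simp add: vs.independent_empty)
  next
    case (Suc n)
    then have n: "n < length s" "Suc n < length s" by auto
    have st: "set (take (Suc n) s) = insert (s!n) (set (take n s))"
      using n by (simp add: take_Suc_conv_app_nth)
    have notin: "s!n \<notin> vs.span (set (take n s))"
    proof (cases "n = 0")
      case True
      have "s!0 \<in> nzvecs d" using mem[of 0] n by linarith
      then have "(s!0) 0 \<noteq> 0" using d unfolding nzvecs_def by auto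
      then have "s!0 \<noteq> 0" by auto
      then show ?thesis using True by simp
    next
      case False
      have n0: "0 < n" using False by simp
      obtain w c where wc: "c \<noteq> 0" "\<forall>j<n. lf d w (s!j) = c" "lf d w (s!n) \<noteq> c"
        using row[OF fs n0 n(1)] by blast
      have t0: "0 < length s - 1" "length s - 1 < length s" using n by auto
      obtain w' c' where wc': "c' \<noteq> 0" "\<forall>j<length s - 1. lf d w' (s!j) = c'"
        using row[OF fs t0] by blast
      have nt: "n < length s - 1" using n by simp
      define u where "u = (\<lambda>l. w l - (c / c') * w' l)"
      have "\<forall>y\<in>set (take n s). lf d u y = 0"
      proof
        fix y assume "y \<in> set (take n s)"
        then obtain j where j: "j < n" "y = s!j" using n
          by (auto simp: in_set_conv_nth)
        have "lf d w (s!j) = c" "lf d w' (s!j) = c'" using wc(2) wc'(2) j(1) nt by auto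
        then show "lf d u y = 0" using wc'(1) unfolding u_def lf_comb j(2) by simp
      qed
      moreover have "lf d u (s!n) \<noteq> 0"
      proof -
        have "lf d w' (s!n) = c'" using wc'(2) nt by blast
        then show ?thesis using wc'(1) wc(3) unfolding u_def lf_comb by simp
      qed
      ultimately show ?thesis using lf_span by blast
    qed
    have "vs.independent (set (take n s))" using Suc.IH Suc.prems by simp
    then show ?case unfolding st by (rule vs.independent_insertI[OF notin])
  qed
  then show ?thesis unfolding lin_indep_def by simp
qed

lemma fs_snoc:
  assumes fs: "falling_star r d s" and T: "set s \<subseteq> T" and v: "v \<in> nzvecs d" "v \<notin> T"
    and g: "\<forall>x\<in>T. phi r d v x = \<gamma>"
  shows "falling_star r d (s @ [v])"
proof -
  obtain \<alpha> where al: "\<And>i j. j < i \<Longrightarrow> i < length s \<Longrightarrow> phi r d (s!i) (s!j) = \<alpha> i"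
    using fs unfolding falling_star_def by blast
  have dist: "distinct (s @ [v])" using fs T v unfolding falling_star_def by auto
  have sub: "set (s @ [v]) \<subseteq> nzvecs d" using fs v unfolding falling_star_def by auto
  have ph: "phi r d ((s @ [v])!i) ((s @ [v])!j) = (if i = length s then \<gamma> else \<alpha> i)"
    if ij: "j < i" "i < length (s @ [v])" for i j
  proof (cases "i = length s")
    case True
    then have "j < length s" using ij by simp
    then have "(s @ [v])!j = s!j" "s!j \<in> T" using T by (auto simp: nth_append)
    moreover have "(s @ [v])!i = v" using True by simp
    ultimately show ?thesis using g True by simp
  next
    case False
    then have "i < length s" using ij by simp
    then show ?thesis using al[OF ij(1)] ij False by (simp add: nth_append)
  qed
  have "\<exists>\<beta>. \<forall>i j. j < i \<and> i < length (s @ [v]) \<longrightarrow> phi r d ((s @ [v])!i) ((s @ [v])!j) = \<beta> i"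
    by (rule exI[of _ "\<lambda>i. if i = length s then \<gamma> else \<alpha> i"]) (simp add: ph)
  then show ?thesis using dist sub unfolding falling_star_def by blast
qed

lemma fs_nil: "falling_star r d []"
  unfolding falling_star_def by simp

lemma FS_le:
  assumes T: "finite T" and b: "\<And>s. falling_star r d s \<Longrightarrow> set s \<subseteq> T \<Longrightarrow> length s \<le> B"
  shows "FS r d T \<le> B"
proof -
  let ?L = "{length s | s. falling_star r d s \<and> set s \<subseteq> T}"
  have "?L \<subseteq> {..card T}"
  proof
    fix n assume "n \<in> ?L"
    then obtain s where "n = length s" "falling_star r d s" "set s \<subseteq> T" by blast
    then have "distinct s" unfolding falling_star_def by blast
    then have "n = card (set s)" using \<open>n = length s\<close> by (simp add: distinct_card)
    moreover have "card (set s) \<le> card T" using card_mono[OF T \<open>set s \<subseteq> T\<close>] .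
    ultimately show "n \<in> {..card T}" by simp
  qed
  then have fin: "finite ?L" using finite_subset by blast
  have "length [] \<in> ?L" unfolding mem_Collect_eq by (rule exI[of _ "[]"]) (simp add: fs_nil)
  then have ne: "?L \<noteq> {}" by blast
  have "Max ?L \<in> ?L" using fin ne by (rule Max_in)
  then obtain s where "Max ?L = length s" "falling_star r d s" "set s \<subseteq> T" by blast
  then show ?thesis unfolding FS_def using b by simp
qed

theorem corollary3p5:
  fixes r :: "('a::{field,finite} \<times> 'a) set" and d :: nat
  assumes "odd CARD('a)"
    and "d > 0"
    and "linear_order_on (UNIV - {0}) r"
  shows "(\<forall>s. falling_star r d s \<longrightarrow> lin_indep (set (take (length s - 1) s)))
    \<and> (\<forall>T. T \<subseteq> nzvecs d \<and> finite T \<and> T \<noteq> {} \<longrightarrow> rk T + 1 \<ge> FS r d T)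
    \<and> (\<forall>T v \<gamma>. T \<subseteq> nzvecs d \<and> finite T \<and> T \<noteq> {} \<and> v \<in> nzvecs d \<and> v \<notin> T
          \<and> (\<forall>x\<in>T. phi r d v x = \<gamma>) \<longrightarrow> rk T \<ge> FS r d T)"
proof (intro conjI allI impI)
  fix s :: "(nat \<Rightarrow> 'a) list"
  assume "falling_star r d s"
  then show "lin_indep (set (take (length s - 1) s))" using indep_take assms(2) by blast
next
  fix T :: "(nat \<Rightarrow> 'a) set"
  assume T: "T \<subseteq> nzvecs d \<and> finite T \<and> T \<noteq> {}"
  show "FS r d T \<le> rk T + 1"
  proof (rule FS_le)
    show "finite T" using T by blast
  next
    fix s assume fs: "falling_star r d s" and sT: "set s \<subseteq> T"
    have li: "lin_indep (set (take (length s - 1) s))" using indep_take fs assms(2) by blast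
    have dist: "distinct s" using fs unfolding falling_star_def by blast
    have "card (set (take (length s - 1) s)) = length s - 1"
      using dist by (simp add: distinct_card)
    moreover have "set (take (length s - 1) s) \<subseteq> T" using sT set_take_subset by fast
    moreover have "finite T" using T by blast
    ultimately have "length s - 1 \<le> rk T" using card_le_rk[OF _ _ li] by simp
    then show "length s \<le> rk T + 1" by simp
  qed
next
  fix T :: "(nat \<Rightarrow> 'a) set" and v \<gamma>
  assume T: "T \<subseteq> nzvecs d \<and> finite T \<and> T \<noteq> {} \<and> v \<in> nzvecs d \<and> v \<notin> T \<and> (\<forall>x\<in>T. phi r d v x = \<gamma>)"
  show "FS r d T \<le> rk T"
  proof (rule FS_le)
    show "finite T" using T by blast
  next
    fix s assume fs: "falling_star r d s" and sT: "set s \<subseteq> T"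
    have fs2: "falling_star r d (s @ [v])" using fs_snoc[OF fs sT, of v \<gamma>] T by blast
    have "lin_indep (set (take (length (s @ [v]) - 1) (s @ [v])))" using indep_take fs2 assms(2) by blast
    then have li: "lin_indep (set s)" by simp
    have dist: "distinct s" using fs unfolding falling_star_def by blast
    have "card (set s) = length s" using dist by (simp add: distinct_card)
    moreover have "finite T" using T by blast
    ultimately show "length s \<le> rk T" using card_le_rk[OF sT _ li] by simp
  qed
qed

end
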